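(* For $p=2$: $\nu_2((2^4))\ge 4$ and $\nu_2((3^4))\ge 5$.
   Context: $(y^k)$ denotes the partition with $k$ parts equal to $y$. For $\lambda\vdash n$, $S^\lambda_{\mathbb Z}$ is the integral Specht module spanned by polytabloids $e_t$ in the permutation module on $\lambda$-tabloids, which has the bilinear form making tabloids orthonormal. The $p$-Schaper number $\nu_p(\lambda)$ is the least $k$ such that $\overline{S^\lambda_k}/\overline{S^\lambda_{k+1}}\ne 0$, where $S^\lambda_i=\{x\in S^\lambda_{\mathbb Z}:p^i\mid\langle x,y\rangle\ \forall y\}$ and the bar is reduction mod $p$; equivalently, the largest $k$ with $p^k\mid\langle e_s,e_t\rangle$ for all $\lambda$-tableaux $s,t$. *)

theory Defs
  imports "HOL-Combinatorics.Permutations"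
begin

text \<open>A partition is a list of positive parts (weakly decreasing). Its Young diagram
consists of the cells (i,j) with i < number of parts and j < i-th part.\<close>

definition cells :: "nat list \<Rightarrow> (nat \<times> nat) set" where
  "cells la = {(i, j). i < length la \<and> j < la ! i}"

definition psize :: "nat list \<Rightarrow> nat" where
  "psize la = sum_list la"

definition powpart :: "nat \<Rightarrow> nat \<Rightarrow> nat list" where
  "powpart y k = replicate k y"

definition tableau :: "nat list \<Rightarrow> (nat \<times> nat \<Rightarrow> nat) \<Rightarrow> bool" where
  "tableau la t \<longleftrightarrow> bij_betw t (cells la) {1..psize la}"

text \<open>The tabloid {t}: the row-equivalence class of t, recorded as the set of
pairs (row index, entry).\<close>
definition tabloid :: "nat list \<Rightarrow> (nat \<times> nat \<Rightarrow> nat) \<Rightarrow> (nat \<times> nat) set" where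
  "tabloid la t = {(i, t (i, j)) | i j. (i, j) \<in> cells la}"

definition colstab :: "nat list \<Rightarrow> (nat \<times> nat \<Rightarrow> nat) \<Rightarrow> (nat \<Rightarrow> nat) set" where
  "colstab la t = {\<sigma>. \<sigma> permutes {1..psize la} \<and>
      (\<forall>c. \<sigma> ` (t ` {(i, j) \<in> cells la. j = c}) = t ` {(i, j) \<in> cells la. j = c})}"

text \<open>The inner product of polytabloids, e_t = sum over sigma in C_t of sgn(sigma) {sigma t},
with tabloids orthonormal.\<close>
definition gram :: "nat list \<Rightarrow> (nat \<times> nat \<Rightarrow> nat) \<Rightarrow> (nat \<times> nat \<Rightarrow> nat) \<Rightarrow> int" where
  "gram la s t = (\<Sum>\<sigma>\<in>colstab la s. \<Sum>\<tau>\<in>colstab la t.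
      sign \<sigma> * sign \<tau> * (if tabloid la (\<sigma> \<circ> s) = tabloid la (\<tau> \<circ> t) then 1 else 0))"

definition schaper :: "nat \<Rightarrow> nat list \<Rightarrow> nat" where
  "schaper p la = (GREATEST e. \<forall>s t. tableau la s \<longrightarrow> tableau la t \<longrightarrow>
      int p ^ e dvd gram la s t)"

end

theory Submission
  imports Defs
begin


lemma orbit_dvd:
  fixes X :: "'a set" and I :: "'b set" and \<Phi> :: "'b \<Rightarrow> 'a \<Rightarrow> 'a" and w :: "'a \<Rightarrow> int"
  assumes "finite X" "finite I" "I \<noteq> {}"
  and closed: "\<And>i x. i\<in>I \<Longrightarrow> x\<in>X \<Longrightarrow> \<Phi> i x \<in> X"
  and winv: "\<And>i x. i\<in>I \<Longrightarrow> x\<in>X \<Longrightarrow> w (\<Phi> i x) = w x"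
  and free: "\<And>i j x. i\<in>I \<Longrightarrow> j\<in>I \<Longrightarrow> x\<in>X \<Longrightarrow> \<Phi> i x = \<Phi> j x \<Longrightarrow> i = j"
  and inv: "\<And>i x. i\<in>I \<Longrightarrow> x\<in>X \<Longrightarrow> \<exists>j\<in>I. \<Phi> j (\<Phi> i x) = x"
  and comp: "\<And>i j x. i\<in>I \<Longrightarrow> j\<in>I \<Longrightarrow> x\<in>X \<Longrightarrow> \<exists>k\<in>I. \<Phi> j (\<Phi> i x) = \<Phi> k x"
  shows "int (card I) dvd (\<Sum>x\<in>X. w x)"
  using assms(1,3) closed winv free inv comp
proof (induction "card X" arbitrary: X rule: less_induct)
  case less
  show ?case
  proof (cases "X = {}")
    case True then show ?thesis by simp
  next
    case False
    then obtain x where x: "x \<in> X" by blast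
    define Ob where "Ob = (\<lambda>i. \<Phi> i x) ` I"
    have ObX: "Ob \<subseteq> X" using less.prems(3) x by (auto simp: Ob_def)
    have injOb: "inj_on (\<lambda>i. \<Phi> i x) I" using less.prems(5) x by (auto simp: inj_on_def)
    have sumOb: "(\<Sum>y\<in>Ob. w y) = int (card I) * w x"
    proof -
      have "(\<Sum>y\<in>Ob. w y) = (\<Sum>i\<in>I. w (\<Phi> i x))" unfolding Ob_def using sum.reindex[OF injOb] by simp
      also have "\<dots> = (\<Sum>i\<in>I. w x)" using less.prems(4) x by simp
      finally show ?thesis by simp
    qed
    have clos: "\<And>i y. i\<in>I \<Longrightarrow> y\<in>X - Ob \<Longrightarrow> \<Phi> i y \<in> X - Ob"
    proof
      fix i y assume i: "i\<in>I" and y: "y \<in> X - Ob"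
      show "\<Phi> i y \<in> X" using less.prems(3) i y by auto
      show "\<Phi> i y \<notin> Ob"
      proof
        assume "\<Phi> i y \<in> Ob"
        then obtain j where j: "j\<in>I" "\<Phi> i y = \<Phi> j x" by (auto simp: Ob_def)
        obtain i' where i': "i'\<in>I" "\<Phi> i' (\<Phi> i y) = y" using less.prems(6)[OF i] y by auto
        obtain k where k: "k\<in>I" "\<Phi> i' (\<Phi> j x) = \<Phi> k x" using less.prems(7)[OF j(1) i'(1) x] by auto
        have "y = \<Phi> k x" using i' j k by simp
        then show False using y k by (auto simp: Ob_def)
      qed
    qed
    have xO: "x \<in> Ob"
    proof -
      obtain i where i: "i \<in> I" using less.prems(2) by blast
      obtain j where j: "j\<in>I" "\<Phi> j (\<Phi> i x) = x" using less.prems(6)[OF i x] by auto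
      obtain k where k: "k\<in>I" "\<Phi> j (\<Phi> i x) = \<Phi> k x" using less.prems(7)[OF i j(1) x] by auto
      show ?thesis using j k unfolding Ob_def by (metis image_eqI)
    qed
    have lt: "card (X - Ob) < card X"
      using x xO less.prems(1) by (intro psubset_card_mono) auto
    have IH: "int (card I) dvd (\<Sum>y\<in>X - Ob. w y)"
      apply (rule less.hyps[OF lt])
      using less.prems clos by auto
    have "(\<Sum>y\<in>X. w y) = (\<Sum>y\<in>Ob. w y) + (\<Sum>y\<in>X - Ob. w y)"
      using ObX less.prems(1) by (metis add.commute sum.subset_diff)
    then show ?thesis using IH sumOb by simp
  qed
qed


definition cj :: "(nat\<times>nat \<Rightarrow> nat) \<Rightarrow> (nat\<times>nat) set \<Rightarrow> (nat\<times>nat \<Rightarrow> nat\<times>nat) \<Rightarrow> nat \<Rightarrow> nat" where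
  "cj s C f x = (if x \<in> s ` C then s (f (inv_into C s x)) else x)"

lemma cj_app: "inj_on s C \<Longrightarrow> c \<in> C \<Longrightarrow> cj s C f (s c) = s (f c)"
  by (simp add: cj_def)

lemma cj_out: "x \<notin> s ` C \<Longrightarrow> cj s C f x = x"
  by (simp add: cj_def)

lemma cj_cong: "(\<And>c. c\<in>C \<Longrightarrow> f c = g c) \<Longrightarrow> cj s C f = cj s C g"
  by (auto simp: cj_def fun_eq_iff inv_into_into)

lemma cj_comp:
  assumes "inj_on s C" "f ` C \<subseteq> C" "g ` C \<subseteq> C"
  shows "cj s C f \<circ> cj s C g = cj s C (f \<circ> g)"
proof
  fix x show "(cj s C f \<circ> cj s C g) x = cj s C (f \<circ> g) x"
  proof (cases "x \<in> s ` C")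
    case True
    then obtain c where c: "c \<in> C" "x = s c" by auto
    then show ?thesis using assms by (auto simp: cj_app)
  next
    case False then show ?thesis by (simp add: cj_out)
  qed
qed

lemma cj_id: "(\<And>c. c\<in>C \<Longrightarrow> f c = c) \<Longrightarrow> cj s C f = id"
  by (auto simp: cj_def fun_eq_iff inv_into_into f_inv_into_f)

lemma cj_perm:
  assumes "inj_on s C" "bij_betw f C C"
  shows "cj s C f permutes (s ` C)"
proof (rule bij_imp_permutes)
  have b1: "bij_betw (inv_into C s) (s ` C) C" using assms(1) by (simp add: bij_betw_inv_into inj_on_imp_bij_betw)
  have b2: "bij_betw s C (s ` C)" using assms(1) by (simp add: inj_on_imp_bij_betw)
  have "bij_betw (s \<circ> f \<circ> inv_into C s) (s ` C) (s ` C)"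
    using bij_betw_trans[OF bij_betw_trans[OF b1 assms(2)] b2] by (simp add: comp_assoc)
  then show "bij_betw (cj s C f) (s ` C) (s ` C)"
    by (rule bij_betw_cong[THEN iffD1, rotated]) (auto simp: cj_def)
  show "\<And>x. x \<notin> s ` C \<Longrightarrow> cj s C f x = x" by (simp add: cj_out)
qed

definition rel :: "(nat\<times>nat \<Rightarrow> nat) \<Rightarrow> (nat\<times>nat \<Rightarrow> nat) \<Rightarrow> (nat\<times>nat) set \<Rightarrow> nat \<Rightarrow> nat" where
  "rel s t C x = (if x \<in> s ` C then t (inv_into C s x) else x)"

lemma rel_perm:
  assumes "inj_on s C" "inj_on t C" "t ` C = s ` C"
  shows "rel s t C permutes (s ` C)"
proof (rule bij_imp_permutes)
  have b1: "bij_betw (inv_into C s) (s ` C) C" using assms(1) by (simp add: bij_betw_inv_into inj_on_imp_bij_betw)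
  have b2: "bij_betw t C (s ` C)" using assms(2,3) by (metis inj_on_imp_bij_betw)
  have "bij_betw (t \<circ> inv_into C s) (s ` C) (s ` C)"
    by (rule bij_betw_trans[OF b1 b2])
  then show "bij_betw (rel s t C) (s ` C) (s ` C)"
    by (rule bij_betw_cong[THEN iffD1, rotated]) (auto simp: rel_def)
  show "\<And>x. x \<notin> s ` C \<Longrightarrow> rel s t C x = x" by (simp add: rel_def)
qed

lemma sign_cj_eq:
  assumes "inj_on s C" "inj_on t C" "t ` C = s ` C" "finite C" "bij_betw f C C"
  shows "sign (cj t C f) = sign (cj s C f)"
proof -
  let ?g = "rel s t C"
  have pg: "?g permutes (s ` C)" using rel_perm assms by blast
  have ps: "cj s C f permutes (s ` C)" using cj_perm assms by blast
  have pt: "cj t C f permutes (s ` C)" using cj_perm[OF assms(2,5)] assms(3) by simp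
  have fin: "finite (s ` C)" using assms(4) by simp
  have eq: "cj t C f \<circ> ?g = ?g \<circ> cj s C f"
  proof
    fix x show "(cj t C f \<circ> ?g) x = (?g \<circ> cj s C f) x"
    proof (cases "x \<in> s ` C")
      case True
      then obtain c where c: "c \<in> C" "x = s c" by auto
      have fc: "f c \<in> C" using assms(5) c(1) by (auto simp: bij_betw_def)
      show ?thesis using c fc assms(1,2) by (simp add: rel_def cj_app)
    next
      case False then show ?thesis using assms(3) by (simp add: cj_out rel_def)
    qed
  qed
  have "sign (cj t C f) * sign ?g = sign ?g * sign (cj s C f)"
    using arg_cong[OF eq, of sign] pg ps pt fin
    by (simp add: sign_compose permutes_imp_permutation)
  moreover have "sign ?g \<noteq> 0" by (simp add: sign_def)
  ultimately show ?thesis by (simp add: mult.commute)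
qed



definition rk :: "nat \<Rightarrow> nat \<Rightarrow> nat" where "rk k i = (if i < 4 then (i + k) mod 4 else i)"
definition Rk :: "nat \<Rightarrow> nat\<times>nat \<Rightarrow> nat\<times>nat" where "Rk k = (\<lambda>(i,j). (rk k i, j))"
definition RB :: "(nat \<Rightarrow> nat) \<Rightarrow> (nat \<Rightarrow> nat) \<Rightarrow> nat set \<Rightarrow> nat\<times>nat \<Rightarrow> nat\<times>nat" where
  "RB p q B = (\<lambda>(i,j). (if j \<in> B \<and> i = p j then q j else if j \<in> B \<and> i = q j then p j else i, j))"

lemma rk_lt: "i < 4 \<Longrightarrow> rk k i < 4" by (simp add: rk_def)
lemma rk_comp: "i < 4 \<Longrightarrow> rk k (rk k' i) = rk ((k+k') mod 4) i"
  by (simp add: rk_def mod_add_left_eq mod_add_right_eq add.assoc add.commute add.left_commute)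
lemma rk0: "i < 4 \<Longrightarrow> rk 0 i = i" by (simp add: rk_def)
lemma rk_fp: "0 < k \<Longrightarrow> k < 4 \<Longrightarrow> i < 4 \<Longrightarrow> rk k i \<noteq> i"
proof -
  assume a: "0 < k" "k < 4" "i < 4"
  then have "k \<in> {1,2,3}" "i \<in> {0,1,2,3}" by auto
  then show ?thesis by (auto simp: rk_def)
qed
lemma inv4: "k < 4 \<Longrightarrow> (k + (4 - k) mod 4) mod 4 = (0::nat)"
proof -
  assume "k < 4" then have "k \<in> {0,1,2,3}" by auto
  then show ?thesis by auto
qed

lemma d_pos: "k < 4 \<Longrightarrow> k' < 4 \<Longrightarrow> k \<noteq> k' \<Longrightarrow> 0 < (k + (4 - k') mod 4) mod (4::nat)"
proof -
  assume a: "k < 4" "k' < 4" "k \<noteq> k'"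
  then have "k \<in> {0,1,2,3}" "k' \<in> {0,1,2,3}" by auto
  then show ?thesis using a(3) by auto
qed
lemma three: "\<exists>r::nat. r < 4 \<and> r \<noteq> a \<and> r \<noteq> b"
proof (cases "0 \<noteq> a \<and> 0 \<noteq> b")
  case True then show ?thesis by (intro exI[of _ 0]) simp
next
  case F1: False
  show ?thesis
  proof (cases "1 \<noteq> a \<and> 1 \<noteq> b")
    case True then show ?thesis by (intro exI[of _ 1]) simp
  next
    case False
    then show ?thesis using F1 by (intro exI[of _ 2]) auto
  qed
qed

locale rect = fixes m :: nat assumes m1: "1 \<le> m" and m3: "m \<le> 3"
begin

abbreviation "Cm \<equiv> {(i,j). i < (4::nat) \<and> j < m}"
abbreviation "la \<equiv> powpart m 4"
abbreviation "Nm \<equiv> {1..4*m}"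

lemma cells_la: "cells la = Cm"
  by (auto simp: cells_def powpart_def)

lemma psize_la: "psize la = 4*m"
  by (simp add: psize_def powpart_def sum_list_replicate)

lemma finC: "finite Cm"
proof -
  have "Cm = {0..<4} \<times> {0..<m}" by auto
  then show ?thesis by simp
qed

lemma tab: "tableau la s \<Longrightarrow> inj_on s Cm \<and> s ` Cm = Nm"
  by (simp add: tableau_def cells_la psize_la bij_betw_def)

definition col :: "(nat\<times>nat \<Rightarrow> nat) \<Rightarrow> nat \<Rightarrow> nat" where
  "col s x = snd (inv_into Cm s x)"

lemma col_app: "inj_on s Cm \<Longrightarrow> i < 4 \<Longrightarrow> j < m \<Longrightarrow> col s (s (i,j)) = j"
  by (simp add: col_def)

lemma colset: assumes "tableau la s"
  shows "s ` {(i, j) \<in> cells la. j = c} = {x \<in> Nm. col s x = c}"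
proof -
  have i: "inj_on s Cm" and im: "s ` Cm = Nm" using tab[OF assms] by auto
  show ?thesis
  proof (rule set_eqI, rule iffI)
    fix x assume "x \<in> s ` {(i, j) \<in> cells la. j = c}"
    then obtain i j where "i<4" "j<m" "j = c" "x = s (i,j)" by (auto simp: cells_la)
    then show "x \<in> {x \<in> Nm. col s x = c}" using i im col_app by auto
  next
    fix x assume x: "x \<in> {x \<in> Nm. col s x = c}"
    have "x \<in> s ` Cm" using x im by simp
    then obtain c' where "c' \<in> Cm" "x = s c'" by blast
    then obtain i j where ij: "i<4" "j<m" "x = s (i,j)" by auto
    then have "j = c" using x col_app[OF i] by auto
    then show "x \<in> s ` {(i, j) \<in> cells la. j = c}" using ij by (auto simp: cells_la)
  qed
qed

lemma colstab_iff: assumes "tableau la s"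
  shows "\<sigma> \<in> colstab la s \<longleftrightarrow> \<sigma> permutes Nm \<and> (\<forall>x\<in>Nm. col s (\<sigma> x) = col s x)"
proof
  assume a: "\<sigma> \<in> colstab la s"
  then have p: "\<sigma> permutes Nm" by (simp add: colstab_def psize_la)
  have e: "\<And>c. \<sigma> ` {x \<in> Nm. col s x = c} = {x \<in> Nm. col s x = c}"
    using a colset[OF assms] by (simp add: colstab_def)
  show "\<sigma> permutes Nm \<and> (\<forall>x\<in>Nm. col s (\<sigma> x) = col s x)"
  proof (intro conjI ballI p)
    fix x assume x: "x \<in> Nm"
    then have "\<sigma> x \<in> \<sigma> ` {y \<in> Nm. col s y = col s x}" by auto
    then show "col s (\<sigma> x) = col s x" using e[of "col s x"] by auto
  qed
next
  assume a: "\<sigma> permutes Nm \<and> (\<forall>x\<in>Nm. col s (\<sigma> x) = col s x)"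
  have "\<And>c. \<sigma> ` {x \<in> Nm. col s x = c} = {x \<in> Nm. col s x = c}"
  proof (rule set_eqI, rule iffI)
    fix c y assume "y \<in> \<sigma> ` {x \<in> Nm. col s x = c}"
    then obtain x where "x \<in> Nm" "col s x = c" "y = \<sigma> x" by auto
    moreover have "\<sigma> x \<in> Nm" using permutes_in_image[of \<sigma> Nm x] a calculation(1) by simp
    ultimately show "y \<in> {x \<in> Nm. col s x = c}" using a by auto
  next
    fix c y assume y: "y \<in> {x \<in> Nm. col s x = c}"
    have ap: "\<sigma> permutes Nm" using a by simp
    have "y = \<sigma> (inv \<sigma> y)" using permutes_inverses(1)[OF ap] by simp
    moreover have "inv \<sigma> y \<in> Nm" using y permutes_in_image[OF permutes_inv[OF ap]] by simp
    moreover have "col s (inv \<sigma> y) = c"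
    proof -
      have "col s (\<sigma> (inv \<sigma> y)) = col s (inv \<sigma> y)" using a calculation(2) by simp
      then show ?thesis using calculation(1) y by simp
    qed
    ultimately show "y \<in> \<sigma> ` {x \<in> Nm. col s x = c}" by blast
  qed
  then show "\<sigma> \<in> colstab la s" using a colset[OF assms] by (simp add: colstab_def psize_la)
qed


lemma Rk_map: "c \<in> Cm \<Longrightarrow> Rk k c \<in> Cm"
  by (auto simp: Rk_def rk_lt)

lemma Rk_comp: "c \<in> Cm \<Longrightarrow> Rk k (Rk k' c) = Rk ((k+k') mod 4) c"
  by (auto simp: Rk_def rk_comp rk_lt)

lemma Rk0: "c \<in> Cm \<Longrightarrow> Rk 0 c = c"
  by (auto simp: Rk_def rk0)

lemma Rk_bij: "k < 4 \<Longrightarrow> bij_betw (Rk k) Cm Cm"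
proof (rule bij_betwI[where g="Rk ((4-k) mod 4)"])
  assume k: "k < 4"
  show "Rk k \<in> Cm \<rightarrow> Cm" "Rk ((4-k) mod 4) \<in> Cm \<rightarrow> Cm" using Rk_map by (intro Pi_I; simp)+
  fix c assume c: "c \<in> Cm"
  have e1: "((4 - k) mod 4 + k) mod 4 = 0" using inv4[OF k] by (simp add: add.commute)
  show "Rk ((4 - k) mod 4) (Rk k c) = c" using c by (simp only: Rk_comp e1 Rk0)
  show "Rk k (Rk ((4 - k) mod 4) c) = c" using c by (simp only: Rk_comp inv4[OF k] Rk0)
qed

lemma tabE: assumes "tableau la s" "x \<in> Nm"
  obtains i j where "i < 4" "j < m" "x = s (i,j)"
proof -
  have "x \<in> s ` Cm" using assms tab by simp
  then obtain c where c: "c \<in> Cm" "x = s c" by (rule imageE)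
  obtain i j where "c = (i,j)" by (cases c)
  then show ?thesis using c that by auto
qed

definition H :: "(nat\<times>nat \<Rightarrow> nat) \<Rightarrow> nat \<Rightarrow> nat \<Rightarrow> nat" where
  "H s k = cj s Cm (Rk k)"

lemma Rk_img: "Rk k ` Cm \<subseteq> Cm" using Rk_map by (intro image_subsetI) simp

lemma H_comp: assumes "inj_on s Cm" shows "H s k \<circ> H s k' = H s ((k+k') mod 4)"
proof -
  have "H s k \<circ> H s k' = cj s Cm (Rk k \<circ> Rk k')" unfolding H_def by (rule cj_comp[OF assms Rk_img Rk_img])
  also have "\<dots> = cj s Cm (Rk ((k+k') mod 4))"
  proof (rule cj_cong)
    fix c assume "c \<in> Cm" then show "(Rk k \<circ> Rk k') c = Rk ((k+k') mod 4) c" using Rk_comp by simp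
  qed
  finally show ?thesis by (simp add: H_def)
qed

lemma H0: "H s 0 = id"
  unfolding H_def by (rule cj_id) (simp add: Rk0)

lemma H_perm: assumes "tableau la s" "k < 4" shows "H s k permutes Nm"
proof -
  have "cj s Cm (Rk k) permutes (s ` Cm)" using cj_perm[OF conjunct1[OF tab[OF assms(1)]] Rk_bij[OF assms(2)]] .
  then show ?thesis using conjunct2[OF tab[OF assms(1)]] by (simp add: H_def)
qed

lemma H_app: "inj_on s Cm \<Longrightarrow> c \<in> Cm \<Longrightarrow> H s k (s c) = s (Rk k c)"
  by (simp add: H_def cj_app)

lemma H_col: assumes "tableau la s" "x \<in> Nm" shows "col s (H s k x) = col s x"
proof -
  have i: "inj_on s Cm" and im: "s ` Cm = Nm" using tab[OF assms(1)] by auto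
  obtain i j where ij: "i < 4" "j < m" "x = s (i,j)" using tabE[OF assms(1,2)] .
  show ?thesis using ij i by (simp add: H_app Rk_def col_app rk_lt)
qed

lemma H_in: assumes "tableau la s" "k < 4" shows "H s k \<in> colstab la s"
  using H_perm[OF assms] H_col[OF assms(1)] by (simp add: colstab_iff[OF assms(1)])

lemma H_fp: assumes "tableau la s" "x \<in> Nm" "0 < k" "k < 4" shows "H s k x \<noteq> x"
proof -
  have i: "inj_on s Cm" and im: "s ` Cm = Nm" using tab[OF assms(1)] by auto
  obtain i j where ij: "i < 4" "j < m" "x = s (i,j)" using tabE[OF assms(1,2)] .
  have "H s k x = s (rk k i, j)" using ij i by (simp add: H_app Rk_def)
  moreover have "s (rk k i, j) \<noteq> s (i, j)"
    using i ij rk_fp[OF assms(3,4) ij(1)] rk_lt[OF ij(1)] by (auto dest: inj_onD)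
  ultimately show ?thesis using ij by simp
qed


abbreviation "PQ p q \<equiv> (\<forall>j<m. p j < 4 \<and> q j < (4::nat) \<and> p j \<noteq> q j)"

lemma RB_map: "PQ p q \<Longrightarrow> c \<in> Cm \<Longrightarrow> RB p q B c \<in> Cm"
  by (cases c) (auto simp: RB_def)

lemma RB_img: "PQ p q \<Longrightarrow> RB p q B ` Cm \<subseteq> Cm"
  using RB_map by (intro image_subsetI) simp

lemma RB_comp: "PQ p q \<Longrightarrow> c \<in> Cm \<Longrightarrow> RB p q B (RB p q B' c) = RB p q ((B - B') \<union> (B' - B)) c"
  by (cases c) (auto simp: RB_def)

lemma RB_empty: "RB p q {} c = c"
  by (cases c) (auto simp: RB_def)

lemma RB_bij: assumes "PQ p q" shows "bij_betw (RB p q B) Cm Cm"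
proof (rule bij_betwI[where g="RB p q B"])
  show "RB p q B \<in> Cm \<rightarrow> Cm" using RB_map[OF assms] by (intro Pi_I) simp
  then show "RB p q B \<in> Cm \<rightarrow> Cm" .
  fix c assume c: "c \<in> Cm"
  show "RB p q B (RB p q B c) = c" using RB_comp[OF assms c, of B B] by (simp add: RB_empty)
  then show "RB p q B (RB p q B c) = c" .
qed

definition rho :: "(nat\<times>nat \<Rightarrow> nat) \<Rightarrow> (nat \<Rightarrow> nat) \<Rightarrow> (nat \<Rightarrow> nat) \<Rightarrow> nat set \<Rightarrow> nat \<Rightarrow> nat" where
  "rho s p q B = cj s Cm (RB p q B)"

lemma rho_comp: assumes "inj_on s Cm" "PQ p q"
  shows "rho s p q B \<circ> rho s p q B' = rho s p q ((B - B') \<union> (B' - B))"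
proof -
  have "rho s p q B \<circ> rho s p q B' = cj s Cm (RB p q B \<circ> RB p q B')"
    unfolding rho_def by (rule cj_comp[OF assms(1) RB_img[OF assms(2)] RB_img[OF assms(2)]])
  also have "\<dots> = cj s Cm (RB p q ((B - B') \<union> (B' - B)))"
  proof (rule cj_cong)
    fix c assume "c \<in> Cm" then show "(RB p q B \<circ> RB p q B') c = RB p q ((B - B') \<union> (B' - B)) c"
      using RB_comp[OF assms(2)] by simp
  qed
  finally show ?thesis by (simp add: rho_def)
qed

lemma rho_empty: "rho s p q {} = id"
  unfolding rho_def by (rule cj_id) (simp add: RB_empty)

lemma rho_perm: assumes "tableau la s" "PQ p q" shows "rho s p q B permutes Nm"
proof -
  have "cj s Cm (RB p q B) permutes (s ` Cm)" using cj_perm[OF conjunct1[OF tab[OF assms(1)]] RB_bij[OF assms(2)]] .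
  then show ?thesis using conjunct2[OF tab[OF assms(1)]] by (simp add: rho_def)
qed

lemma rho_app: "inj_on s Cm \<Longrightarrow> c \<in> Cm \<Longrightarrow> rho s p q B (s c) = s (RB p q B c)"
  by (simp add: rho_def cj_app)

lemma rho_in_s: assumes "tableau la s" "PQ p q" shows "rho s p q B \<in> colstab la s"
proof -
  have i: "inj_on s Cm" using tab[OF assms(1)] by simp
  have "\<forall>x\<in>Nm. col s (rho s p q B x) = col s x"
  proof
    fix x assume "x \<in> Nm"
    then obtain i j where ij: "i < 4" "j < m" "x = s (i,j)" using tabE[OF assms(1)] by metis
    have "RB p q B (i,j) \<in> Cm" using RB_map[OF assms(2)] ij by simp
    moreover have "snd (RB p q B (i,j)) = j" by (simp add: RB_def)
    ultimately show "col s (rho s p q B x) = col s x" using ij i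
      by (cases "RB p q B (i,j)") (simp add: rho_app col_app)
  qed
  then show ?thesis using rho_perm[OF assms] by (simp add: colstab_iff[OF assms(1)])
qed

lemma rho_in_t: assumes "tableau la s" "tableau la t" "PQ p q"
  and cc: "\<forall>j<m. col t (s (p j, j)) = col t (s (q j, j))"
  shows "rho s p q B \<in> colstab la t"
proof -
  have i: "inj_on s Cm" using tab[OF assms(1)] by simp
  have "\<forall>x\<in>Nm. col t (rho s p q B x) = col t x"
  proof
    fix x assume "x \<in> Nm"
    then obtain i j where ij: "i < 4" "j < m" "x = s (i,j)" using tabE[OF assms(1)] by metis
    have r: "rho s p q B x = s (RB p q B (i,j))" using ij i by (simp add: rho_app)
    show "col t (rho s p q B x) = col t x"
      using cc ij r by (auto simp: RB_def)
  qed
  then show ?thesis using rho_perm[OF assms(1,3)] by (simp add: colstab_iff[OF assms(2)])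
qed


lemma rk_inv1: "i < 4 \<Longrightarrow> k < 4 \<Longrightarrow> rk ((4-k) mod 4) (rk k i) = i"
proof -
  assume a: "i < 4" "k < 4"
  have "(k + (4 - k) mod 4) mod 4 = 0" using inv4[OF a(2)] .
  then have "((4 - k) mod 4 + k) mod 4 = 0" by (simp add: add.commute)
  then show ?thesis using rk_comp[OF a(1), of "(4-k) mod 4" k] rk0[OF a(1)] by simp
qed

lemma rk_inv2: "i < 4 \<Longrightarrow> k < 4 \<Longrightarrow> rk k (rk ((4-k) mod 4) i) = i"
  using rk_comp[of i k "(4-k) mod 4"] inv4[of k] rk0[of i] by simp

lemma tab_la: "tabloid la h = {(i, h (i,j)) | i j. i < 4 \<and> j < m}"
  by (simp add: tabloid_def cells_la)

lemma tab_cong: "(\<And>i j. i < 4 \<Longrightarrow> j < m \<Longrightarrow> h (i,j) = h' (i,j)) \<Longrightarrow> tabloid la h = tabloid la h'"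
  unfolding tab_la by (intro Collect_cong) (metis (mono_tags, lifting))

lemma tab_left: "tabloid la (r \<circ> h) = (\<lambda>(i,x). (i, r x)) ` tabloid la h"
  unfolding tab_la by (intro set_eqI iffI) (auto simp: image_iff)

lemma tab_rows: assumes k: "k < 4"
  shows "tabloid la (h \<circ> Rk k) = (\<lambda>(i,x). (rk ((4-k) mod 4) i, x)) ` tabloid la h"
proof (intro set_eqI iffI)
  fix z assume "z \<in> tabloid la (h \<circ> Rk k)"
  then obtain i j where ij: "i < 4" "j < m" "z = (i, h (rk k i, j))" by (auto simp: tab_la Rk_def)
  have "(rk k i, h (rk k i, j)) \<in> tabloid la h" using ij rk_lt[OF ij(1)] by (auto simp: tab_la)
  moreover have "z = (\<lambda>(i,x). (rk ((4-k) mod 4) i, x)) (rk k i, h (rk k i, j))"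
    using ij rk_inv1[OF ij(1) k] by simp
  ultimately show "z \<in> (\<lambda>(i,x). (rk ((4-k) mod 4) i, x)) ` tabloid la h" by (rule rev_image_eqI)
next
  fix z assume "z \<in> (\<lambda>(i,x). (rk ((4-k) mod 4) i, x)) ` tabloid la h"
  then obtain i' j where ij: "i' < 4" "j < m" "z = (rk ((4-k) mod 4) i', h (i', j))" by (auto simp: tab_la)
  define i where "i = rk ((4-k) mod 4) i'"
  have i4: "i < 4" using rk_lt[OF ij(1)] by (simp add: i_def)
  have "rk k i = i'" using rk_inv2[OF ij(1) k] by (simp add: i_def)
  then have "z = (i, (h \<circ> Rk k) (i, j))" using ij by (simp add: i_def Rk_def)
  then show "z \<in> tabloid la (h \<circ> Rk k)" using i4 ij(2) by (auto simp: tab_la)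
qed

lemma tab_act: assumes "tableau la s" "k < 4"
  shows "tabloid la (r \<circ> \<sigma> \<circ> H s k \<circ> s) =
     (\<lambda>(i,x). (i, r x)) ` ((\<lambda>(i,x). (rk ((4-k) mod 4) i, x)) ` tabloid la (\<sigma> \<circ> s))"
proof -
  have i: "inj_on s Cm" using tab[OF assms(1)] by simp
  have "tabloid la (r \<circ> \<sigma> \<circ> H s k \<circ> s) = tabloid la (r \<circ> ((\<sigma> \<circ> s) \<circ> Rk k))"
    by (rule tab_cong) (simp add: H_app[OF i] Rk_def)
  also have "\<dots> = (\<lambda>(i,x). (i, r x)) ` tabloid la ((\<sigma> \<circ> s) \<circ> Rk k)" by (rule tab_left)
  also have "\<dots> = (\<lambda>(i,x). (i, r x)) ` ((\<lambda>(i,x). (rk ((4-k) mod 4) i, x)) ` tabloid la (\<sigma> \<circ> s))"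
    by (simp only: tab_rows[OF assms(2)])
  finally show ?thesis .
qed


lemma rho_comp': "inj_on s Cm \<Longrightarrow> PQ p q \<Longrightarrow> rho s p q B (rho s p q B' z) = rho s p q ((B - B') \<union> (B' - B)) z"
  using rho_comp[of s p q B B'] by (metis comp_apply)

lemma H_comp': "inj_on s Cm \<Longrightarrow> H s k (H s k' z) = H s ((k+k') mod 4) z"
  using H_comp[of s k k'] by (metis comp_apply)

lemma act_comp: assumes "inj_on s Cm" "inj_on u Cm" "PQ p q"
  shows "rho s p q B' \<circ> (rho s p q B \<circ> \<sigma> \<circ> H u k) \<circ> H u k' =
         rho s p q ((B' - B) \<union> (B - B')) \<circ> \<sigma> \<circ> H u ((k+k') mod 4)"
  by (simp add: fun_eq_iff rho_comp'[OF assms(1,3)] H_comp'[OF assms(2)])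

lemma colstab_comp: assumes "tableau la s" "\<sigma>1 \<in> colstab la s" "\<sigma>2 \<in> colstab la s"
  shows "\<sigma>1 \<circ> \<sigma>2 \<in> colstab la s"
proof -
  have p1: "\<sigma>1 permutes Nm" and c1: "\<forall>x\<in>Nm. col s (\<sigma>1 x) = col s x" using assms(2) colstab_iff[OF assms(1)] by auto
  have p2: "\<sigma>2 permutes Nm" and c2: "\<forall>x\<in>Nm. col s (\<sigma>2 x) = col s x" using assms(3) colstab_iff[OF assms(1)] by auto
  have "\<forall>x\<in>Nm. col s (\<sigma>1 (\<sigma>2 x)) = col s x"
  proof
    fix x assume x: "x \<in> Nm"
    then have "\<sigma>2 x \<in> Nm" using permutes_in_image[OF p2] by simp
    then show "col s (\<sigma>1 (\<sigma>2 x)) = col s x" using c1 c2 x by simp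
  qed
  then show ?thesis using permutes_compose[OF p2 p1] colstab_iff[OF assms(1)] by simp
qed

lemma finite_colstab: "finite (colstab la s)"
proof -
  have "colstab la s \<subseteq> {\<sigma>. \<sigma> permutes Nm}" by (auto simp: colstab_def psize_la)
  then show ?thesis using finite_permutations[of Nm] finite_subset by auto
qed

lemma colstab_perm: "\<sigma> \<in> colstab la s \<Longrightarrow> \<sigma> permutes Nm"
  by (simp add: colstab_def psize_la)

lemma gram_X: "gram la s t = (\<Sum>x\<in>{x \<in> colstab la s \<times> colstab la t. tabloid la (fst x \<circ> s) = tabloid la (snd x \<circ> t)}.
    sign (fst x) * sign (snd x))"
proof -
  have "gram la s t = (\<Sum>x\<in>colstab la s \<times> colstab la t.
      (if tabloid la (fst x \<circ> s) = tabloid la (snd x \<circ> t) then sign (fst x) * sign (snd x) else 0))"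
    unfolding gram_def sum.cartesian_product by (intro sum.cong) (auto split: prod.splits)
  also have "\<dots> = (\<Sum>x\<in>{x \<in> colstab la s \<times> colstab la t. tabloid la (fst x \<circ> s) = tabloid la (snd x \<circ> t)}.
    sign (fst x) * sign (snd x))"
    by (rule sum.inter_filter[symmetric]) (simp add: finite_colstab)
  finally show ?thesis .
qed


lemma col_lt: assumes "tableau la t" "x \<in> Nm" shows "col t x < m"
proof -
  have "x \<in> t ` Cm" using assms tab by simp
  then have "inv_into Cm t x \<in> Cm" by (rule inv_into_into)
  then show ?thesis by (auto simp: col_def)
qed

lemma s_in: "tableau la s \<Longrightarrow> i < 4 \<Longrightarrow> j < m \<Longrightarrow> s (i,j) \<in> Nm"
  using tab[of s] by (metis (mono_tags, lifting) case_prod_conv image_eqI mem_Collect_eq)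

lemma pairs: assumes "tableau la s" "tableau la t"
  obtains p q where "PQ p q" "\<forall>j<m. col t (s (p j, j)) = col t (s (q j, j))"
proof -
  have ex: "\<forall>j. \<exists>ab::nat\<times>nat. j < m \<longrightarrow> (fst ab < 4 \<and> snd ab < 4 \<and> fst ab \<noteq> snd ab \<and>
      col t (s (fst ab, j)) = col t (s (snd ab, j)))"
  proof
    fix j
    show "\<exists>ab::nat\<times>nat. j < m \<longrightarrow> (fst ab < 4 \<and> snd ab < 4 \<and> fst ab \<noteq> snd ab \<and>
      col t (s (fst ab, j)) = col t (s (snd ab, j)))"
    proof (cases "j < m")
      case False then show ?thesis by simp
    next
      case True
      let ?f = "\<lambda>a. col t (s (a, j))"
      have img: "?f ` {0..<4} \<subseteq> {0..<m}"
        using col_lt[OF assms(2)] s_in[OF assms(1) _ True] by auto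
      have "\<not> inj_on ?f {0..<4}"
      proof
        assume "inj_on ?f {0..<4}"
        then have "card {0..<(4::nat)} \<le> card {0..<m}" using card_inj_on_le[OF _ img] by simp
        then show False using m3 by simp
      qed
      then obtain a b where "a \<in> {0..<4}" "b \<in> {0..<4}" "a \<noteq> b" "?f a = ?f b"
        unfolding inj_on_def by blast
      then show ?thesis by (intro exI[of _ "(a,b)"]) auto
    qed
  qed
  then obtain g where g: "\<forall>j. j < m \<longrightarrow> (fst (g j) < 4 \<and> snd (g j) < 4 \<and> fst (g j) \<noteq> snd (g j) \<and>
      col t (s (fst (g j), j)) = col t (s (snd (g j), j)))" by metis
  show ?thesis by (rule that[of "\<lambda>j. fst (g j)" "\<lambda>j. snd (g j)"]) (use g in auto)
qed


lemma sign_pm: "sign f = 1 \<or> sign f = -1" by (simp add: sign_def)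

lemma main_dvd: assumes st: "tableau la s" and tt: "tableau la t"
  shows "int (2^(m+2)) dvd gram la s t"
proof -
  obtain p q where pq: "PQ p q" and cc: "\<forall>j<m. col t (s (p j, j)) = col t (s (q j, j))"
    using pairs[OF st tt] by metis
  have is_: "inj_on s Cm" and ims: "s ` Cm = Nm" using tab[OF st] by auto
  have it: "inj_on t Cm" and imt: "t ` Cm = Nm" using tab[OF tt] by auto
  define X where "X = {x \<in> colstab la s \<times> colstab la t. tabloid la (fst x \<circ> s) = tabloid la (snd x \<circ> t)}"
  define I where "I = Pow {0..<m} \<times> {0..<(4::nat)}"
  define \<Phi> where "\<Phi> = (\<lambda>(i::nat set \<times> nat) (x::(nat\<Rightarrow>nat)\<times>(nat\<Rightarrow>nat)).
      (rho s p q (fst i) \<circ> fst x \<circ> H s (snd i), rho s p q (fst i) \<circ> snd x \<circ> H t (snd i)))"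
  define w where "w = (\<lambda>x::(nat\<Rightarrow>nat)\<times>(nat\<Rightarrow>nat). sign (fst x) * sign (snd x))"
  have cardI: "card I = 2^(m+2)" by (simp add: I_def card_cartesian_product card_Pow power_add)
  have finX: "finite X" unfolding X_def using finite_colstab by simp
  have finI: "finite I" by (simp add: I_def)
  have neI: "I \<noteq> {}" by (auto simp: I_def)
  have closed: "\<And>i x. i\<in>I \<Longrightarrow> x\<in>X \<Longrightarrow> \<Phi> i x \<in> X"
  proof -
    fix i x assume i: "i \<in> I" and x: "x \<in> X"
    obtain B k where ik: "i = (B,k)" "k < 4" using i by (auto simp: I_def)
    obtain \<sigma> \<tau> where xs: "x = (\<sigma>,\<tau>)" "\<sigma> \<in> colstab la s" "\<tau> \<in> colstab la t"
       "tabloid la (\<sigma> \<circ> s) = tabloid la (\<tau> \<circ> t)" using x by (auto simp: X_def)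
    have c1: "rho s p q B \<circ> \<sigma> \<circ> H s k \<in> colstab la s"
      by (intro colstab_comp[OF st] rho_in_s[OF st pq] H_in[OF st ik(2)] xs(2))
    have c2: "rho s p q B \<circ> \<tau> \<circ> H t k \<in> colstab la t"
      by (intro colstab_comp[OF tt] rho_in_t[OF st tt pq cc] H_in[OF tt ik(2)] xs(3))
    have c3: "tabloid la (rho s p q B \<circ> \<sigma> \<circ> H s k \<circ> s) = tabloid la (rho s p q B \<circ> \<tau> \<circ> H t k \<circ> t)"
      by (simp only: tab_act[OF st ik(2)] tab_act[OF tt ik(2)] xs(4))
    show "\<Phi> i x \<in> X" using c1 c2 c3 by (simp add: X_def \<Phi>_def ik xs)
  qed
  have winv: "\<And>i x. i\<in>I \<Longrightarrow> x\<in>X \<Longrightarrow> w (\<Phi> i x) = w x"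
  proof -
    fix i x assume i: "i \<in> I" and x: "x \<in> X"
    obtain B k where ik: "i = (B,k)" "k < 4" using i by (auto simp: I_def)
    obtain \<sigma> \<tau> where xs: "x = (\<sigma>,\<tau>)" "\<sigma> \<in> colstab la s" "\<tau> \<in> colstab la t"
      using x by (auto simp: X_def)
    have fN: "finite Nm" by simp
    have pr: "permutation (rho s p q B)" using rho_perm[OF st pq] fN permutes_imp_permutation by blast
    have ps: "permutation \<sigma>" using colstab_perm[OF xs(2)] fN permutes_imp_permutation by blast
    have pt: "permutation \<tau>" using colstab_perm[OF xs(3)] fN permutes_imp_permutation by blast
    have phs: "permutation (H s k)" using H_perm[OF st ik(2)] fN permutes_imp_permutation by blast
    have pht: "permutation (H t k)" using H_perm[OF tt ik(2)] fN permutes_imp_permutation by blast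
    have heq: "sign (H t k) = sign (H s k)"
      unfolding H_def by (rule sign_cj_eq[OF is_ it _ finC Rk_bij[OF ik(2)]]) (rule trans[OF imt ims[symmetric]])
    have "w (\<Phi> i x) = sign (rho s p q B) * sign \<sigma> * sign (H s k) * (sign (rho s p q B) * sign \<tau> * sign (H t k))"
      by (simp add: w_def \<Phi>_def ik xs sign_compose pr ps pt phs pht permutation_compose)
    also have "\<dots> = sign \<sigma> * sign \<tau>" using heq sign_pm[of "rho s p q B"] sign_pm[of "H s k"] by auto
    finally show "w (\<Phi> i x) = w x" by (simp add: w_def xs)
  qed
  have invs: "\<And>i x. i\<in>I \<Longrightarrow> x\<in>X \<Longrightarrow> \<exists>j\<in>I. \<Phi> j (\<Phi> i x) = x"
  proof -
    fix i x assume i: "i \<in> I" and x: "x \<in> X"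
    obtain B k where ik: "i = (B,k)" "k < 4" "B \<subseteq> {0..<m}" using i by (auto simp: I_def)
    obtain \<sigma> \<tau> where xs: "x = (\<sigma>,\<tau>)" using x by (cases x) auto
    have jI: "(B, (4-k) mod 4) \<in> I" using ik by (auto simp: I_def)
    have "\<Phi> (B, (4-k) mod 4) (\<Phi> i x) = x"
      by (simp add: \<Phi>_def ik xs act_comp[OF is_ is_ pq] act_comp[OF is_ it pq] inv4[OF ik(2)] rho_empty H0)
    then show "\<exists>j\<in>I. \<Phi> j (\<Phi> i x) = x" using jI by blast
  qed
  have comps: "\<And>i j x. i\<in>I \<Longrightarrow> j\<in>I \<Longrightarrow> x\<in>X \<Longrightarrow> \<exists>k\<in>I. \<Phi> j (\<Phi> i x) = \<Phi> k x"
  proof -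
    fix i j x assume i: "i \<in> I" and j: "j \<in> I" and x: "x \<in> X"
    obtain B k where ik: "i = (B,k)" "k < 4" "B \<subseteq> {0..<m}" using i by (auto simp: I_def)
    obtain B' k' where jk: "j = (B',k')" "k' < 4" "B' \<subseteq> {0..<m}" using j by (auto simp: I_def)
    obtain \<sigma> \<tau> where xs: "x = (\<sigma>,\<tau>)" using x by (cases x) auto
    have kI: "((B' - B) \<union> (B - B'), (k+k') mod 4) \<in> I" using ik jk by (auto simp: I_def)
    have "\<Phi> j (\<Phi> i x) = \<Phi> ((B' - B) \<union> (B - B'), (k+k') mod 4) x"
      by (simp add: \<Phi>_def ik jk xs act_comp[OF is_ is_ pq] act_comp[OF is_ it pq])
    then show "\<exists>k\<in>I. \<Phi> j (\<Phi> i x) = \<Phi> k x" using kI by blast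
  qed
  have free: "\<And>i j x. i\<in>I \<Longrightarrow> j\<in>I \<Longrightarrow> x\<in>X \<Longrightarrow> \<Phi> i x = \<Phi> j x \<Longrightarrow> i = j"
  proof -
    fix i j x assume i: "i \<in> I" and j: "j \<in> I" and x: "x \<in> X" and e: "\<Phi> i x = \<Phi> j x"
    obtain B k where ik: "i = (B,k)" "k < 4" "B \<subseteq> {0..<m}" using i by (auto simp: I_def)
    obtain B' k' where jk: "j = (B',k')" "k' < 4" "B' \<subseteq> {0..<m}" using j by (auto simp: I_def)
    obtain \<sigma> \<tau> where xs: "x = (\<sigma>,\<tau>)" "\<sigma> \<in> colstab la s" using x by (auto simp: X_def)
    have sp: "\<sigma> permutes Nm" using colstab_perm[OF xs(2)] .
    define D where "D = (B' - B) \<union> (B - B')"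
    define d where "d = (k + (4 - k') mod 4) mod 4"
    have e1: "rho s p q B \<circ> \<sigma> \<circ> H s k = rho s p q B' \<circ> \<sigma> \<circ> H s k'"
      using e by (simp add: \<Phi>_def ik jk xs)
    have "rho s p q B' \<circ> (rho s p q B \<circ> \<sigma> \<circ> H s k) \<circ> H s ((4 - k') mod 4)
        = rho s p q B' \<circ> (rho s p q B' \<circ> \<sigma> \<circ> H s k') \<circ> H s ((4 - k') mod 4)"
      using e1 by simp
    then have e2: "rho s p q D \<circ> \<sigma> \<circ> H s d = \<sigma>"
      by (simp add: act_comp[OF is_ is_ pq] inv4[OF jk(2)] rho_empty H0 D_def d_def)
    have d4: "d < 4" by (simp add: d_def)
    have kk: "k = k'"
    proof (rule ccontr)
      assume "k \<noteq> k'"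
      then have d0: "0 < d" using ik(2) jk(2) d_pos unfolding d_def by blast
      obtain r where r: "r < 4" "r \<noteq> p 0" "r \<noteq> q 0" using three by blast
      have m0: "0 < m" using m1 by simp
      define y where "y = s (r, 0)"
      have yN: "y \<in> Nm" using s_in[OF st r(1) m0] by (simp add: y_def)
      have ry: "rho s p q D y = y"
        using r m0 by (simp add: y_def rho_app[OF is_] RB_def)
      define x0 where "x0 = inv \<sigma> y"
      have x0N: "x0 \<in> Nm" using yN permutes_in_image[OF permutes_inv[OF sp]] by (simp add: x0_def)
      have sx0: "\<sigma> x0 = y" using permutes_inverses(1)[OF sp] by (simp add: x0_def)
      have "rho s p q D (\<sigma> (H s d x0)) = y" using fun_cong[OF e2, of x0] sx0 by simp
      then have "rho s p q D (rho s p q D (\<sigma> (H s d x0))) = rho s p q D y" by simp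
      then have "\<sigma> (H s d x0) = y" using rho_comp'[OF is_ pq] ry rho_empty by simp
      then have "H s d x0 = x0" using sx0 permutes_inj[OF sp] by (auto dest: injD)
      then show False using H_fp[OF st x0N d0 d4] by simp
    qed
    have d0: "d = 0" using kk jk(2) inv4 by (simp add: d_def)
    have e3: "\<forall>z\<in>Nm. rho s p q D z = z"
    proof
      fix z assume z: "z \<in> Nm"
      have "\<sigma> (inv \<sigma> z) = z" using permutes_inverses(1)[OF sp] .
      then show "rho s p q D z = z" using fun_cong[OF e2, of "inv \<sigma> z"] d0 H0 by simp
    qed
    have "D = {}"
    proof (rule ccontr)
      assume "D \<noteq> {}"
      then obtain jj where jj: "jj \<in> D" by blast
      then have jm: "jj < m" using ik(3) jk(3) by (auto simp: D_def)
      have pj: "p jj < 4" "q jj < 4" "p jj \<noteq> q jj" using pq jm by auto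
      have "rho s p q D (s (p jj, jj)) = s (q jj, jj)"
        using jj jm pj by (simp add: rho_app[OF is_] RB_def)
      moreover have "s (q jj, jj) \<noteq> s (p jj, jj)"
        using pj jm is_ by (auto dest: inj_onD)
      ultimately show False using e3 s_in[OF st pj(1) jm] by simp
    qed
    then have "B = B'" by (auto simp: D_def)
    then show "i = j" using ik jk kk by simp
  qed
  have "int (card I) dvd (\<Sum>x\<in>X. w x)"
    by (rule orbit_dvd[OF finX finI neI closed winv free invs comps])
  then show ?thesis using cardI gram_X by (simp add: X_def w_def)
qed


lemma tab_inj: assumes st: "tableau la s" and a: "\<sigma> \<in> colstab la s" "\<tau> \<in> colstab la s"
  and e: "tabloid la (\<sigma> \<circ> s) = tabloid la (\<tau> \<circ> s)"
  shows "\<sigma> = \<tau>"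
proof
  fix x
  have ps: "\<sigma> permutes Nm" "\<tau> permutes Nm" using a colstab_perm by auto
  have cs: "\<forall>x\<in>Nm. col s (\<sigma> x) = col s x" "\<forall>x\<in>Nm. col s (\<tau> x) = col s x"
    using a colstab_iff[OF st] by auto
  have is_: "inj_on s Cm" using tab[OF st] by simp
  show "\<sigma> x = \<tau> x"
  proof (cases "x \<in> Nm")
    case False then show ?thesis using ps permutes_not_in by metis
  next
    case True
    then obtain i j where ij: "i < 4" "j < m" "x = s (i,j)" using tabE[OF st] by metis
    have "(i, \<sigma> x) \<in> tabloid la (\<sigma> \<circ> s)" using ij by (auto simp: tab_la)
    then have "(i, \<sigma> x) \<in> tabloid la (\<tau> \<circ> s)" using e by simp
    then obtain j' where j': "j' < m" "\<sigma> x = \<tau> (s (i, j'))" by (auto simp: tab_la)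
    have "col s (\<sigma> x) = j" using cs(1) True ij col_app[OF is_] by simp
    moreover have "col s (\<tau> (s (i, j'))) = j'" using cs(2) s_in[OF st ij(1) j'(1)] col_app[OF is_ ij(1) j'(1)] by simp
    ultimately have "j' = j" using j' by simp
    then show ?thesis using j' ij by simp
  qed
qed

lemma gram_self: assumes st: "tableau la s" shows "gram la s s = int (card (colstab la s))"
proof -
  have "gram la s s = (\<Sum>\<sigma>\<in>colstab la s. 1)"
    unfolding gram_def
  proof (rule sum.cong[OF refl])
    fix \<sigma> assume a: "\<sigma> \<in> colstab la s"
    have "(\<Sum>\<tau>\<in>colstab la s. sign \<sigma> * sign \<tau> * (if tabloid la (\<sigma> \<circ> s) = tabloid la (\<tau> \<circ> s) then 1 else 0))
       = (\<Sum>\<tau>\<in>colstab la s. if \<sigma> = \<tau> then sign \<sigma> * sign \<tau> else 0)"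
      using tab_inj[OF st a] by (intro sum.cong) auto
    also have "\<dots> = 1" using a finite_colstab by simp
    finally show "(\<Sum>\<tau>\<in>colstab la s. sign \<sigma> * sign \<tau> * (if tabloid la (\<sigma> \<circ> s) = tabloid la (\<tau> \<circ> s) then 1 else 0)) = 1" .
  qed
  then show ?thesis by simp
qed

definition s0 :: "nat\<times>nat \<Rightarrow> nat" where "s0 = (\<lambda>(i,j). 4*j + i + 1)"

lemma s0_tab: "tableau la s0"
proof -
  have inj: "inj_on s0 Cm"
  proof (rule inj_onI)
    fix a b assume a: "a \<in> Cm" and b: "b \<in> Cm" and e: "s0 a = s0 b"
    obtain i j where aij: "a = (i,j)" "i < 4" using a by auto
    obtain i' j' where bij: "b = (i',j')" "i' < 4" using b by auto
    have e': "4*j + i = 4*j' + i'" using e aij bij by (simp add: s0_def)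
    then have "(4*j + i) mod 4 = (4*j' + i') mod 4" by simp
    then have "i = i'" using aij(2) bij(2) by simp
    then show "a = b" using e' aij bij by simp
  qed
  have img: "s0 ` Cm = Nm"
  proof (intro set_eqI iffI)
    fix x assume "x \<in> s0 ` Cm"
    then obtain i j where "i < 4" "j < m" "x = 4*j + i + 1" by (auto simp: s0_def)
    then show "x \<in> Nm" by auto
  next
    fix x assume x: "x \<in> Nm"
    define i where "i = (x - 1) mod 4"
    define j where "j = (x - 1) div 4"
    have "i < 4" by (simp add: i_def)
    moreover have "j < m" using x by (auto simp: j_def)
    moreover have "x = s0 (i,j)" using x by (auto simp: s0_def i_def j_def)
    ultimately show "x \<in> s0 ` Cm" by auto
  qed
  show ?thesis using inj img by (simp add: tableau_def cells_la psize_la bij_betw_def)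
qed

lemma schaper_ge: "m + 2 \<le> schaper 2 la"
proof -
  let ?c = "card (colstab la s0)"
  have idin: "id \<in> colstab la s0" by (simp add: colstab_iff[OF s0_tab] permutes_id)
  have cpos: "0 < ?c" using idin finite_colstab card_gt_0_iff by blast
  show ?thesis unfolding schaper_def
  proof (rule Greatest_le_nat[where b = ?c])
    show "\<forall>s t. tableau la s \<longrightarrow> tableau la t \<longrightarrow> int 2 ^ (m + 2) dvd gram la s t"
      using main_dvd by (metis of_nat_numeral of_nat_power)
  next
    fix y assume "\<forall>s t. tableau la s \<longrightarrow> tableau la t \<longrightarrow> int 2 ^ y dvd gram la s t"
    then have "int 2 ^ y dvd int ?c" using s0_tab gram_self by metis
    then have "2 ^ y dvd ?c" by (metis of_nat_dvd_iff of_nat_numeral of_nat_power)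
    then have "2 ^ y \<le> ?c" using cpos by (simp add: dvd_imp_le)
    moreover have "y < 2 ^ y" by (rule less_exp)
    ultimately show "y \<le> ?c" by linarith
  qed
qed

end

theorem mainTheorem5:
  shows "schaper 2 (powpart 2 4) \<ge> 4 \<and> schaper 2 (powpart 3 4) \<ge> 5"
proof
  interpret r2: rect 2 by unfold_locales auto
  show "schaper 2 (powpart 2 4) \<ge> 4" using r2.schaper_ge by simp
next
  interpret r3: rect 3 by unfold_locales auto
  show "schaper 2 (powpart 3 4) \<ge> 5" using r3.schaper_ge by simp
qed


end
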